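(* Let $u=\bar u$ with $\bar u$ a constant vector, and assume $(\bar\eta,\bar\omega_G)$ with $\bar\eta\in\Omega\cap\operatorname{im}B^T$ is an equilibrium of $\dot\eta=B_S^T(\eta)\omega_G$, $M\dot\omega_G=-A\omega_G-B_G\Gamma\sin(\eta)+u$. Then solutions $(\eta,\omega_G)$ of this system with $B_L\Gamma\sin(\eta(0))=B_L\Gamma\sin(\bar\eta)$ locally converge to $(\bar\eta,\bar\omega_G)$.
   Context: A connected undirected graph with $n$ nodes and $m$ edges, nodes partitioned into $n_g$ generator and $n_\ell$ load nodes; $B$ is an incidence matrix partitioned row-wise as $B=\begin{bmatrix}B_G^T & B_L^T\end{bmatrix}^T$. $\Gamma=\mathrm{diag}(\gamma_k)$ is positive definite, $M,A$ positive definite diagonal. $\sin,\cos$ act elementwise, $\Omega=(-\frac{\pi}{2},\frac{\pi}{2})^m$, $\Gamma'(\eta)=\Gamma\,\mathrm{diag}(\cos(\eta_k))$, $B_S(\eta)=B_G\big(I-\Gamma'(\eta)B_L^T(B_L\Gamma'(\eta)B_L^T)^{-1}B_L\big)$. State space: $(\eta,\omega_G)\in\operatorname{im}B^T\times\mathbb{R}^{n_g}$. *)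

theory Defs
  imports "HOL-Analysis.Analysis"
begin

definition diagm :: "real^'n \<Rightarrow> real^'n^'n" where
  "diagm v = (\<chi> i j. if i = j then v $ i else 0)"

definition vsin :: "real^'e \<Rightarrow> real^'e" where
  "vsin x = (\<chi> k. sin (x $ k))"

definition vcos :: "real^'e \<Rightarrow> real^'e" where
  "vcos x = (\<chi> k. cos (x $ k))"

definition incidence_matrix :: "real^'e^'n \<Rightarrow> bool" where
  "incidence_matrix B \<longleftrightarrow> (\<forall>j. \<exists>a b. a \<noteq> b \<and> B $ a $ j = 1 \<and> B $ b $ j = -1
        \<and> (\<forall>c. c \<noteq> a \<and> c \<noteq> b \<longrightarrow> B $ c $ j = 0))"

definition adj_of :: "real^'e^'n \<Rightarrow> ('n \<times> 'n) set" where
  "adj_of B = {(a, b). a \<noteq> b \<and> (\<exists>j. B $ a $ j \<noteq> 0 \<and> B $ b $ j \<noteq> 0)}"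

definition connected_incidence :: "real^'e^'n \<Rightarrow> bool" where
  "connected_incidence B \<longleftrightarrow> (\<forall>x y. (x, y) \<in> (adj_of B)\<^sup>*)"

text \<open>Generator rows (Inl) and load rows (Inr) of B.\<close>
definition BG :: "real^'e^('g::finite + 'l::finite) \<Rightarrow> real^'e^'g" where
  "BG B = (\<chi> i j. B $ Inl i $ j)"

definition BL :: "real^'e^('g::finite + 'l::finite) \<Rightarrow> real^'e^'l" where
  "BL B = (\<chi> i j. B $ Inr i $ j)"

definition Omega :: "(real^'e) set" where
  "Omega = {x. \<forall>k. \<bar>x $ k\<bar> < pi / 2}"

definition Gammap :: "real^'e \<Rightarrow> real^'e \<Rightarrow> real^'e^'e" where
  "Gammap gam \<eta> = diagm gam ** diagm (vcos \<eta>)"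

definition BS :: "real^'e^('g::finite + 'l::finite) \<Rightarrow> real^'e \<Rightarrow> real^'e \<Rightarrow> real^'e^'g" where
  "BS B gam \<eta> = BG B ** (mat 1 - Gammap gam \<eta> ** transpose (BL B)
      ** matrix_inv (BL B ** Gammap gam \<eta> ** transpose (BL B)) ** BL B)"

definition imBT :: "real^'e^'n \<Rightarrow> (real^'e) set" where
  "imBT B = range (\<lambda>x. transpose B *v x)"

text \<open>A solution on [0,inf) of
  eta' = B_S(eta)^T omega_G,  M omega_G' = -A omega_G - B_G Gamma sin(eta) + u,
  whose eta-component stays in Omega (where the vector field is defined).\<close>
definition is_solution ::
  "real^'e^('g::finite + 'l::finite) \<Rightarrow> real^'e \<Rightarrow> real^'g \<Rightarrow> real^'g \<Rightarrow> real^'g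
     \<Rightarrow> (real \<Rightarrow> real^'e) \<Rightarrow> (real \<Rightarrow> real^'g) \<Rightarrow> bool" where
  "is_solution B gam Mv Av u \<eta> \<omega> \<longleftrightarrow>
     (\<forall>t\<ge>0. \<eta> t \<in> Omega \<and>
        (\<eta> has_vector_derivative (transpose (BS B gam (\<eta> t)) *v \<omega> t)) (at t within {0..}) \<and>
        (\<exists>w'. (\<omega> has_vector_derivative w') (at t within {0..}) \<and>
              diagm Mv *v w' = - (diagm Av *v \<omega> t) - (BG B ** diagm gam) *v vsin (\<eta> t) + u))"

definition is_equilibrium ::
  "real^'e^('g::finite + 'l::finite) \<Rightarrow> real^'e \<Rightarrow> real^'g \<Rightarrow> real^'g \<Rightarrow> real^'g \<Rightarrow> real^'e \<Rightarrow> real^'g \<Rightarrow> bool" where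
  "is_equilibrium B gam Mv Av u \<eta>b \<omega>b \<longleftrightarrow>
     transpose (BS B gam \<eta>b) *v \<omega>b = 0 \<and>
     - (diagm Av *v \<omega>b) - (BG B ** diagm gam) *v vsin \<eta>b + u = 0"

end

theory Submission
  imports Defs
begin


lemma diagm_mult_vec: "diagm v *v x = (\<chi> i. v$i * x$i)"
proof -
  have "\<And>i. (\<Sum>j\<in>UNIV. (if i = j then v$i else 0) * x$j) = v$i * x$i"
  proof -
    fix i
    have "(\<Sum>j\<in>UNIV. (if i = j then v$i else 0) * x$j) = (\<Sum>j\<in>UNIV. if i = j then v$i * x$j else 0)"
      by (rule sum.cong) auto
    then show "(\<Sum>j\<in>UNIV. (if i = j then v$i else 0) * x$j) = v$i * x$i" by simp
  qed
  then show ?thesis by (simp add: diagm_def matrix_vector_mult_def vec_eq_iff)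
qed

lemma diagm_nth: "(diagm v *v x) $ i = v$i * x$i"
  by (simp add: diagm_mult_vec)

lemma transpose_diagm: "transpose (diagm v) = diagm v"
  by (simp add: diagm_def transpose_def vec_eq_iff)

lemma diagm_mult: "diagm a ** diagm b = diagm (\<chi> i. a$i * b$i)"
proof -
  have "\<And>i j. (\<Sum>k\<in>UNIV. (if i = k then a$i else 0) * (if k = j then b$k else 0)) = (if i = j then a$i * b$i else 0)"
  proof -
    fix i j
    have "(\<Sum>k\<in>UNIV. (if i = k then a$i else 0) * (if k = j then b$k else 0)) = (\<Sum>k\<in>UNIV. if k = i then (if i = j then a$i * b$i else 0) else 0)"
      by (rule sum.cong) auto
    then show "(\<Sum>k\<in>UNIV. (if i = k then a$i else 0) * (if k = j then b$k else 0)) = (if i = j then a$i * b$i else 0)" by simp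
  qed
  then show ?thesis by (simp add: diagm_def matrix_matrix_mult_def vec_eq_iff)
qed

lemma transpose_diff: "transpose (A - (C::real^'n^'m)) = transpose A - transpose C"
  by (simp add: transpose_def vec_eq_iff)

lemma inner_diagm: "x \<bullet> (diagm v *v y) = (\<Sum>i\<in>UNIV. v$i * x$i * y$i)"
  by (simp add: inner_vec_def diagm_nth mult_ac)

lemma matrix_inv_works:
  assumes "invertible A"
  shows "A ** matrix_inv A = mat 1 \<and> matrix_inv A ** A = mat 1"
  using assms unfolding matrix_inv_def invertible_def by (rule someI_ex)

lemma inner_mat_left: "x \<bullet> (A *v y) = (transpose A *v x) \<bullet> (y::real^'n)"
  by (metis dot_lmul_matrix transpose_matrix_vector)



lemma col_sum:
  fixes B :: "real^'e^'n" and y :: "real^'n"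
  assumes "a \<noteq> b" "B$a$j = 1" "B$b$j = -1" "\<forall>c. c\<noteq>a \<and> c\<noteq>b \<longrightarrow> B$c$j = 0"
  shows "(\<Sum>n\<in>UNIV. B$n$j * y$n) = y$a - y$b"
proof -
  have "(\<Sum>n\<in>UNIV. B$n$j * y$n) = (\<Sum>n\<in>UNIV. (if n = a then y$a else 0) + (if n = b then - y$b else 0))"
    by (rule sum.cong) (use assms in auto)
  also have "\<dots> = y$a - y$b" by (simp add: sum.distrib)
  finally show ?thesis .
qed

lemma BL_transpose_inj:
  fixes B :: "real^'e^('g::finite + 'l::finite)"
  assumes inc: "incidence_matrix B" and con: "connected_incidence B"
    and x: "transpose (BL B) *v x = 0"
  shows "x = 0"
proof -
  define y :: "real^('g+'l)" where "y = (\<chi> n. case n of Inl _ \<Rightarrow> 0 | Inr i \<Rightarrow> x$i)"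
  have colj: "(\<Sum>n\<in>UNIV. B$n$j * y$n) = 0" for j
  proof -
    have "(\<Sum>n\<in>UNIV. B$n$j * y$n) = (\<Sum>n\<in>(UNIV::'g set) <+> (UNIV::'l set). B$n$j * y$n)"
      by simp
    also have "\<dots> = (\<Sum>i\<in>UNIV. B$Inr i$j * x$i)"
      by (subst sum.Plus) (auto simp: y_def)
    also have "\<dots> = (transpose (BL B) *v x)$j"
      by (simp add: matrix_vector_mult_def transpose_def BL_def)
    finally show ?thesis using x by simp
  qed
  have adj: "y$p = y$q" if "(p,q) \<in> adj_of B" for p q
  proof -
    from that obtain j where pq: "p \<noteq> q" "B$p$j \<noteq> 0" "B$q$j \<noteq> 0" by (auto simp: adj_of_def)
    from inc obtain a b where ab: "a \<noteq> b" "B$a$j = 1" "B$b$j = -1" "\<forall>c. c\<noteq>a \<and> c\<noteq>b \<longrightarrow> B$c$j = 0"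
      unfolding incidence_matrix_def by blast
    have "y$a = y$b" using col_sum[OF ab, of y] colj[of j] by simp
    moreover have "p = a \<or> p = b" "q = a \<or> q = b" using ab pq by auto
    ultimately show ?thesis using pq by auto
  qed
  have "y$p = y$q" if "(p,q) \<in> (adj_of B)\<^sup>*" for p q
    using that by (induction rule: rtrancl_induct) (auto dest: adj)
  then have "y$(Inr i) = y$(Inl undefined)" for i using con unfolding connected_incidence_def by blast
  then show ?thesis by (simp add: y_def vec_eq_iff)
qed



lemma Gammap_diag: "Gammap gam \<eta> = diagm (\<chi> k. gam$k * cos (\<eta>$k))"
  by (simp add: Gammap_def diagm_mult vcos_def)

lemma inner_diagm_self_nonneg:
  assumes "\<forall>k. g$k \<ge> 0" shows "x \<bullet> (diagm g *v x) \<ge> 0"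
  unfolding inner_diagm using assms by (intro sum_nonneg) (metis mult.assoc mult_nonneg_nonneg zero_le_square)

lemma Y_invertible:
  fixes B :: "real^'e^('g::finite + 'l::finite)"
  assumes inc: "incidence_matrix B" and con: "connected_incidence B"
    and gam: "\<forall>k. gam$k > 0" and eta: "\<eta> \<in> Omega"
  shows "invertible (BL B ** Gammap gam \<eta> ** transpose (BL B))"
proof -
  define g where "g = (\<chi> k. gam$k * cos (\<eta>$k))"
  have gpos: "g$k > 0" for k
  proof -
    have "\<bar>\<eta>$k\<bar> < pi/2" using eta by (auto simp: Omega_def)
    then have "cos (\<eta>$k) > 0" by (intro cos_gt_zero_pi) auto
    then show ?thesis using gam by (simp add: g_def)
  qed
  have "\<forall>x. (BL B ** diagm g ** transpose (BL B)) *v x = 0 \<longrightarrow> x = 0"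
  proof (intro allI impI)
    fix x assume h: "(BL B ** diagm g ** transpose (BL B)) *v x = 0"
    define z where "z = transpose (BL B) *v x"
    have "BL B *v (diagm g *v z) = (BL B ** diagm g ** transpose (BL B)) *v x"
      by (simp add: z_def matrix_vector_mul_assoc matrix_mul_assoc del: transpose_matrix_vector)
    then have "x \<bullet> (BL B *v (diagm g *v z)) = 0"
      using h by simp
    then have "z \<bullet> (diagm g *v z) = 0"
      by (simp add: inner_mat_left[of x] z_def del: transpose_matrix_vector)
    then have "(\<Sum>i\<in>UNIV. g$i * z$i * z$i) = 0" by (simp add: inner_diagm)
    moreover have nn: "\<forall>i\<in>UNIV. g$i*z$i*z$i \<ge> 0" using gpos
      by (metis less_imp_le mult.assoc mult_nonneg_nonneg zero_le_square)
    ultimately have "\<forall>i\<in>UNIV. g$i * z$i * z$i = 0"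
      using sum_nonneg_eq_0_iff[of UNIV "\<lambda>i. g$i * z$i * z$i"] by auto
    then have "z = 0" using gpos by (auto simp: vec_eq_iff) (metis less_irrefl)
    then show "x = 0" using BL_transpose_inj[OF inc con] by (simp add: z_def del: transpose_matrix_vector)
  qed
  then show ?thesis
    by (simp add: invertible_left_inverse matrix_left_invertible_ker Gammap_diag g_def[symmetric] del: transpose_matrix_vector)
qed

lemma inv_sym:
  fixes Y :: "real^'n^'n"
  assumes "invertible Y" "transpose Y = Y"
  shows "transpose (matrix_inv Y) = matrix_inv Y"
proof -
  let ?X = "matrix_inv Y"
  have w: "Y ** ?X = mat 1" "?X ** Y = mat 1" using matrix_inv_works[OF assms(1)] by auto
  have "transpose ?X ** Y = mat 1"
    by (metis assms(2) matrix_transpose_mul transpose_mat w(1))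
  then have "transpose ?X = transpose ?X ** (Y ** ?X)" using w by simp
  also have "\<dots> = ?X" by (simp add: matrix_mul_assoc \<open>transpose ?X ** Y = mat 1\<close>)
  finally show ?thesis .
qed

locale bsalg =
  fixes BLm :: "real^'e^'l::finite" and BGm :: "real^'e^'g::finite" and g :: "real^'e"
  assumes inv: "invertible (BLm ** diagm g ** transpose BLm)"
begin

abbreviation "Y \<equiv> BLm ** diagm g ** transpose BLm"
abbreviation "X \<equiv> matrix_inv Y"
abbreviation "BSm \<equiv> BGm ** (mat 1 - diagm g ** transpose BLm ** X ** BLm)"

lemma YX: "Y ** X = mat 1" "X ** Y = mat 1" using matrix_inv_works[OF inv] by auto

lemma YXv: "Y *v (X *v u) = u"
  by (metis matrix_vector_mul_assoc YX(1) matrix_vector_mul_lid)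

lemma Ysym: "transpose Y = Y"
  by (simp add: matrix_transpose_mul transpose_diagm matrix_mul_assoc)

lemma Xsym: "transpose X = X" using inv_sym[OF inv Ysym] .

lemma BST_apply:
  "transpose BSm *v w = transpose BGm *v w
     - transpose BLm *v (X *v (BLm *v (diagm g *v (transpose BGm *v w))))"
proof -
  have "transpose BSm = (mat 1 - transpose BLm ** X ** BLm ** diagm g) ** transpose BGm"
    by (simp add: matrix_transpose_mul transpose_diff transpose_diagm Xsym matrix_mul_assoc)
  then show ?thesis
    by (simp add: matrix_vector_mult_diff_rdistrib matrix_vector_mul_assoc[symmetric]
        del: transpose_matrix_vector)
qed

lemma BL_G_BST: "BLm *v (diagm g *v (transpose BSm *v w)) = 0"
proof -
  define v where "v = transpose BGm *v w"
  have "BLm *v (diagm g *v (transpose BSm *v w)) =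
      BLm *v (diagm g *v v) - Y *v (X *v (BLm *v (diagm g *v v)))"
    unfolding BST_apply v_def[symmetric]
    by (simp add: matrix_vector_mult_diff_distrib matrix_vector_mul_assoc matrix_mul_assoc del: transpose_matrix_vector)
  also have "\<dots> = 0" by (simp only: YXv) simp
  finally show ?thesis .
qed

lemma BS_apply_ker: "BLm *v z = 0 \<Longrightarrow> BSm *v z = BGm *v z"
  by (simp add: matrix_vector_mult_diff_distrib matrix_vector_mult_diff_rdistrib
      matrix_vector_mul_assoc[symmetric] del: transpose_matrix_vector)

lemma proj_bound:
  assumes gnn: "\<forall>k. g$k \<ge> 0"
  shows "(transpose BSm *v w) \<bullet> (diagm g *v (transpose BSm *v w))
        \<le> (transpose BGm *v w) \<bullet> (diagm g *v (transpose BGm *v w))"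
proof -
  define v where "v = transpose BGm *v w"
  define z where "z = X *v (BLm *v (diagm g *v v))"
  define q where "q = transpose BLm *v z"
  define d where "d = v - q"
  have dd: "transpose BSm *v w = d" unfolding BST_apply d_def q_def z_def v_def ..
  have sym: "a \<bullet> (diagm g *v b) = b \<bullet> (diagm g *v a)" for a b
    by (simp add: inner_diagm mult_ac)
  have e1: "v \<bullet> (diagm g *v q) = (BLm *v (diagm g *v v)) \<bullet> z"
    by (simp add: q_def sym[of v] del: transpose_matrix_vector)
       (metis inner_commute inner_mat_left transpose_transpose)
  have "q \<bullet> (diagm g *v q) = z \<bullet> (Y *v z)"
    by (simp add: q_def inner_mat_left[of _ BLm, symmetric] matrix_vector_mul_assoc[symmetric] del: transpose_matrix_vector)
  also have "Y *v z = BLm *v (diagm g *v v)"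
    unfolding z_def by (rule YXv)
  finally have e2: "q \<bullet> (diagm g *v q) = (BLm *v (diagm g *v v)) \<bullet> z" by (simp add: inner_commute)
  have cross: "d \<bullet> (diagm g *v q) = 0"
    using e1 e2 by (simp add: d_def inner_diff_left)
  have "v \<bullet> (diagm g *v v) = d \<bullet> (diagm g *v d) + 2 * (d \<bullet> (diagm g *v q)) + q \<bullet> (diagm g *v q)"
    unfolding d_def by (simp add: matrix_vector_mult_diff_distrib inner_diff_left inner_diff_right sym[of q v] algebra_simps)
  then have "v \<bullet> (diagm g *v v) = d \<bullet> (diagm g *v d) + q \<bullet> (diagm g *v q)" using cross by simp
  moreover have "q \<bullet> (diagm g *v q) \<ge> 0" using inner_diagm_self_nonneg[OF gnn] .
  ultimately show ?thesis using dd v_def by simp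
qed

end



lemma sin_lip: "\<bar>sin x - sin y\<bar> \<le> \<bar>x - (y::real)\<bar>"
proof -
  have "\<bar>sin x - sin y\<bar> = 2 * \<bar>sin ((x - y) / 2)\<bar> * \<bar>cos ((x + y) / 2)\<bar>"
    by (simp add: sin_diff_sin abs_mult)
  also have "\<dots> \<le> 2 * \<bar>(x - y) / 2\<bar> * 1"
    using abs_sin_x_le_abs_x[of "(x-y)/2"] abs_cos_le_one[of "(x+y)/2"] by (intro mult_mono) auto
  finally show ?thesis by simp
qed

lemma sin_strong_mono:
  assumes r: "r < pi/2" and x: "\<bar>x\<bar> \<le> r" and y: "\<bar>y\<bar> \<le> r"
  shows "(x - y) * (sin x - sin y) \<ge> cos r * (x - y)^2"
proof -
  have main: "(b - a) * (sin b - sin a) \<ge> cos r * (b - a)^2" if ab: "a < b" "\<bar>a\<bar> \<le> r" "\<bar>b\<bar> \<le> r" for a b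
  proof -
    obtain z where z: "a < z" "z < b" "sin b - sin a = (b - a) * cos z"
      using MVT2[OF ab(1), of sin cos] by (auto intro: DERIV_sin)
    have "\<bar>z\<bar> \<le> r" using z ab by auto
    then have "cos r \<le> cos \<bar>z\<bar>"
      by (intro cos_monotone_0_pi_le) (use r in auto)
    then have "cos r \<le> cos z" by simp
    then have "cos r * (b-a)^2 \<le> cos z * (b-a)^2" by (intro mult_right_mono) auto
    also have "\<dots> = (b - a) * (sin b - sin a)" using z by (simp add: power2_eq_square)
    finally show ?thesis .
  qed
  show ?thesis
  proof (cases x y rule: linorder_cases)
    case less then show ?thesis using main[OF less x y] by (simp add: power2_commute algebra_simps)
  next
    case equal then show ?thesis by simp
  next
    case greater then show ?thesis using main[OF greater y x] by simp
  qed
qed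

definition Uf :: "real \<Rightarrow> real \<Rightarrow> real" where
  "Uf a x = cos a - cos x - sin a * (x - a)"

lemma Uf_deriv: "(Uf a has_real_derivative (sin x - sin a)) (at x within S)"
  unfolding Uf_def by (auto intro!: derivative_eq_intros)

lemma Uf_mono_right:
  assumes "a \<le> x1" "x1 \<le> x2" "x2 \<le> pi/2" "-(pi/2) \<le> a"
  shows "Uf a x1 \<le> Uf a x2"
  by (rule DERIV_nonneg_imp_nondecreasing[OF assms(2)])
     (use assms in \<open>auto intro!: exI Uf_deriv sin_monotone_2pi_le\<close>)

lemma Uf_mono_left:
  assumes "x2 \<le> x1" "x1 \<le> a" "-(pi/2) \<le> x2" "a \<le> pi/2"
  shows "Uf a x1 \<le> Uf a x2"
  by (rule DERIV_nonpos_imp_nonincreasing[OF assms(1)])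
     (use assms in \<open>auto intro!: exI Uf_deriv sin_monotone_2pi_le\<close>)

lemma Uf_nonneg:
  assumes "\<bar>a\<bar> \<le> pi/2" "\<bar>x\<bar> \<le> pi/2"
  shows "Uf a x \<ge> 0"
proof (cases "a \<le> x")
  case True
  then have "Uf a a \<le> Uf a x" using assms by (intro Uf_mono_right) auto
  then show ?thesis by (simp add: Uf_def)
next
  case False
  then have "Uf a a \<le> Uf a x" using assms by (intro Uf_mono_left) auto
  then show ?thesis by (simp add: Uf_def)
qed

definition rho :: "real \<Rightarrow> real" where "rho a = (pi/2 - \<bar>a\<bar>) / 2"
lemma rho_facts:
  assumes "\<bar>a\<bar> < pi/2" shows "rho a > 0" "a + rho a < pi/2" "a - rho a > -(pi/2)"
proof -
  have h: "a \<le> \<bar>a\<bar>" "-a \<le> \<bar>a\<bar>" by auto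
  show "rho a > 0" using assms by (simp add: rho_def)
  show "a + rho a < pi/2" using assms h unfolding rho_def by argo
  show "a - rho a > -(pi/2)" using assms h unfolding rho_def by argo
qed

definition mU :: "real \<Rightarrow> real" where "mU a = min (Uf a (a + rho a)) (Uf a (a - rho a))"

lemma mU_pos:
  assumes "\<bar>a\<bar> < pi/2" shows "mU a > 0"
proof -
  have r: "rho a > 0" "a + rho a < pi/2" "a - rho a > -(pi/2)"
    using rho_facts[OF assms] .
  have "Uf a (a + rho a) > 0"
  proof -
    obtain z where z: "a < z" "z < a + rho a" "Uf a (a + rho a) - Uf a a = (a + rho a - a) * (sin z - sin a)"
      using MVT2[OF _ Uf_deriv, of a "a + rho a"] r by auto
    have "sin a < sin z" using z r assms by (intro sin_monotone_2pi) auto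
    then show ?thesis using z r by (simp add: Uf_def)
  qed
  moreover have "Uf a (a - rho a) > 0"
  proof -
    obtain z where z: "a - rho a < z" "z < a" "Uf a a - Uf a (a - rho a) = (a - (a - rho a)) * (sin z - sin a)"
      using MVT2[OF _ Uf_deriv, of "a - rho a" a] r by auto
    have "sin z < sin a" using z r assms by (intro sin_monotone_2pi) auto
    then have "(a - (a - rho a)) * (sin z - sin a) < 0" using r by (simp add: mult_pos_neg)
    then show ?thesis using z by (simp add: Uf_def)
  qed
  ultimately show ?thesis by (simp add: mU_def)
qed

lemma Uf_small:
  assumes a: "\<bar>a\<bar> < pi/2" and x: "\<bar>x\<bar> < pi/2" and U: "Uf a x < mU a"
  shows "\<bar>x - a\<bar> < rho a"
proof (rule ccontr)
  assume "\<not> \<bar>x - a\<bar> < rho a"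
  then have c: "x \<ge> a + rho a \<or> x \<le> a - rho a" by auto
  have r: "rho a > 0" "a + rho a < pi/2" "a - rho a > -(pi/2)"
    using rho_facts[OF a] .
  from c show False
  proof
    assume "x \<ge> a + rho a"
    then have "Uf a (a + rho a) \<le> Uf a x" using r x a by (intro Uf_mono_right) auto
    then show False using U by (simp add: mU_def)
  next
    assume "x \<le> a - rho a"
    then have "Uf a (a - rho a) \<le> Uf a x" using r x a by (intro Uf_mono_left) auto
    then show False using U by (simp add: mU_def)
  qed
qed

lemma Uf_upper: "Uf a x \<le> 2 * \<bar>x - a\<bar>"
proof -
  have "\<bar>cos a - cos x\<bar> \<le> \<bar>x - a\<bar>"
  proof -
    have "\<bar>cos a - cos x\<bar> = \<bar>sin (a + pi/2) - sin (x + pi/2)\<bar>" by (simp add: sin_add)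
    also have "\<dots> \<le> \<bar>x - a\<bar>" using sin_lip[of "a + pi/2" "x + pi/2"] by simp
    finally show ?thesis .
  qed
  moreover have "\<bar>sin a * (x - a)\<bar> \<le> \<bar>x - a\<bar>"
    by (simp add: abs_mult mult_left_le_one_le)
  ultimately have "cos a - cos x \<le> \<bar>x - a\<bar>" "- (sin a * (x - a)) \<le> \<bar>x - a\<bar>"
    using abs_ge_self[of "cos a - cos x"] abs_ge_minus_self[of "sin a*(x-a)"] by linarith+
  then show ?thesis unfolding Uf_def by argo
qed



lemma at_within_nonneg: "t > 0 \<Longrightarrow> at t within {0::real..} = at t"
  by (rule at_within_interior) (simp add: interior_Ici[of "-1"])

lemma deriv_bound_real:
  fixes f :: "real \<Rightarrow> real"
  assumes d: "\<And>t. t \<ge> 0 \<Longrightarrow> (f has_real_derivative f' t) (at t within {0..})"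
    and ab: "0 \<le> a" "a \<le> b" and c: "\<And>t. a \<le> t \<Longrightarrow> t \<le> b \<Longrightarrow> f' t \<le> c"
  shows "f b - f a \<le> c * (b - a)"
proof (cases "a = b")
  case True then show ?thesis by simp
next
  case False
  then have lt: "a < b" using ab by simp
  have cont: "continuous_on {a..b} f"
  proof -
    have "continuous_on {0..} f"
      unfolding continuous_on_eq_continuous_within
      using d by (auto intro: DERIV_continuous)
    then show ?thesis by (rule continuous_on_subset) (use ab in auto)
  qed
  have dd: "(f has_real_derivative f' t) (at t)" if "a < t" for t
    using d[of t] at_within_nonneg[of t] that ab by auto
  obtain l z where z: "a < z" "z < b" "DERIV f z :> l" "f b - f a = (b - a) * l"
    using MVT[OF lt cont] dd by (meson differentiableI real_differentiable_def)
  have "l = f' z" using DERIV_unique[OF z(3) dd[OF z(1)]] .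
  then show ?thesis using z c[of z] lt by (simp add: mult.commute mult_left_mono)
qed

lemma deriv_bound_vec:
  fixes f :: "real \<Rightarrow> 'a::real_normed_vector"
  assumes d: "\<And>t. t \<ge> 0 \<Longrightarrow> (f has_vector_derivative f' t) (at t within {0..})"
    and ab: "0 \<le> a" "a \<le> b" and c: "\<And>t. a \<le> t \<Longrightarrow> t \<le> b \<Longrightarrow> norm (f' t) \<le> L"
  shows "norm (f b - f a) \<le> L * (b - a)"
proof -
  have "norm (f b - f a) \<le> L * norm (b - a)"
  proof (rule differentiable_bound[where S="{a..b}" and f'="\<lambda>t h. h *\<^sub>R f' t"])
    show "convex {a..b}" by simp
    fix x assume x: "x \<in> {a..b}"
    have "(f has_vector_derivative f' x) (at x within {a..b})"
      using d[of x] x ab by (auto intro: has_vector_derivative_within_subset)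
    then show "(f has_derivative (\<lambda>h. h *\<^sub>R f' x)) (at x within {a..b})"
      by (simp add: has_vector_derivative_def)
    have "onorm (\<lambda>h::real. h *\<^sub>R f' x) = onorm (\<lambda>h::real. h) * norm (f' x)"
      by (rule onorm_scaleR_left) (rule bounded_linear_ident)
    then show "onorm (\<lambda>h. h *\<^sub>R f' x) \<le> L" using c[of x] x by (simp add: onorm_id)
  qed (use ab in auto)
  then show ?thesis using ab by simp
qed

lemma mono_cauchy:
  fixes f :: "real \<Rightarrow> real"
  assumes mono: "\<And>s t. 0 \<le> s \<Longrightarrow> s \<le> t \<Longrightarrow> f t \<le> f s"
    and lb: "\<And>t. t \<ge> 0 \<Longrightarrow> f t \<ge> 0" and k: "\<kappa> > 0"
  shows "\<exists>T\<ge>0. \<forall>t\<ge>T. \<forall>h\<ge>0. f t - f (t + h) < \<kappa>"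
proof -
  let ?S = "f ` {0..}"
  define L where "L = Inf ?S"
  have bdd: "bdd_below ?S" using lb by (auto intro!: bdd_belowI[of _ 0])
  have ne: "?S \<noteq> {}" by auto
  have "L < L + \<kappa>" using k by simp
  then obtain x where x: "x \<in> ?S" "x < L + \<kappa>" unfolding L_def using cInf_less_iff[OF ne bdd] by blast
  then obtain T where T: "T \<ge> 0" "f T < L + \<kappa>" by auto
  have "f t - f (t + h) < \<kappa>" if "t \<ge> T" "h \<ge> 0" for t h
  proof -
    have "f t \<le> f T" using mono T that by auto
    moreover have "L \<le> f (t + h)" unfolding L_def using T that by (intro cInf_lower bdd) auto
    ultimately show ?thesis using T by linarith
  qed
  then show ?thesis using T by blast
qed



lemma BT_split:
  fixes B :: "real^'e^('g::finite + 'l::finite)"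
  shows "transpose B *v y = transpose (BG B) *v (\<chi> i. y$Inl i) + transpose (BL B) *v (\<chi> i. y$Inr i)"
proof -
  have "(transpose B *v y)$j = (transpose (BG B) *v (\<chi> i. y$Inl i) + transpose (BL B) *v (\<chi> i. y$Inr i))$j" for j
  proof -
    have "(transpose B *v y)$j = (\<Sum>n\<in>(UNIV::'g set) <+> (UNIV::'l set). B$n$j * y$n)"
      by (simp add: matrix_vector_mult_def transpose_def mult.commute)
    also have "\<dots> = (\<Sum>i\<in>UNIV. B$Inl i$j * y$Inl i) + (\<Sum>i\<in>UNIV. B$Inr i$j * y$Inr i)"
      by (subst sum.Plus) auto
    also have "\<dots> = (transpose (BG B) *v (\<chi> i. y$Inl i) + transpose (BL B) *v (\<chi> i. y$Inr i))$j"
      by (simp add: matrix_vector_mult_def transpose_def BL_def BG_def mult.commute)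
    finally show ?thesis .
  qed
  then show ?thesis by (simp add: vec_eq_iff del: transpose_matrix_vector)
qed

lemma BT_const:
  fixes B :: "real^'e^('g::finite + 'l::finite)"
  assumes inc: "incidence_matrix B" and con: "connected_incidence B"
    and y: "transpose B *v y = 0"
  shows "y$p = y$q"
proof -
  have colj: "(\<Sum>n\<in>UNIV. B$n$j * y$n) = 0" for j
  proof -
    have "(\<Sum>n\<in>UNIV. B$n$j * y$n) = (transpose B *v y)$j"
      by (simp add: matrix_vector_mult_def transpose_def mult.commute del: transpose_matrix_vector)
    then show ?thesis using y by simp
  qed
  have adj: "y$p = y$q" if "(p,q) \<in> adj_of B" for p q
  proof -
    from that obtain j where pq: "p \<noteq> q" "B$p$j \<noteq> 0" "B$q$j \<noteq> 0" by (auto simp: adj_of_def)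
    from inc obtain a b where ab: "a \<noteq> b" "B$a$j = 1" "B$b$j = -1" "\<forall>c. c\<noteq>a \<and> c\<noteq>b \<longrightarrow> B$c$j = 0"
      unfolding incidence_matrix_def by blast
    have "y$a = y$b" using col_sum[OF ab, of y] colj[of j] by simp
    moreover have "p = a \<or> p = b" "q = a \<or> q = b" using ab pq by auto
    ultimately show ?thesis using pq by auto
  qed
  have "y$p = y$q" if "(p,q) \<in> (adj_of B)\<^sup>*" for p q
    using that by (induction rule: rtrancl_induct) (auto dest: adj)
  then show ?thesis using con unfolding connected_incidence_def by blast
qed

lemma col_zero:
  fixes B :: "real^'e^('g::finite + 'l::finite)"
  assumes inc: "incidence_matrix B"
  shows "(\<Sum>i\<in>UNIV. B$Inl i$j) + (\<Sum>i\<in>UNIV. B$Inr i$j) = 0"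
proof -
  from inc obtain a b where ab: "a \<noteq> b" "B$a$j = 1" "B$b$j = -1" "\<forall>c. c\<noteq>a \<and> c\<noteq>b \<longrightarrow> B$c$j = 0"
    unfolding incidence_matrix_def by blast
  have "(\<Sum>n\<in>UNIV. B$n$j * (1::real^('g+'l))$n) = 0" using col_sum[OF ab, of 1] by simp
  then have "(\<Sum>n\<in>(UNIV::'g set) <+> (UNIV::'l set). B$n$j) = 0" by simp
  then show ?thesis by (subst (asm) sum.Plus) auto
qed

lemma sum_BG_zero:
  fixes B :: "real^'e^('g::finite + 'l::finite)"
  assumes inc: "incidence_matrix B" and z: "BL B *v z = 0"
  shows "(\<Sum>i\<in>UNIV. (BG B *v z)$i) = 0"
proof -
  have "(\<Sum>i\<in>UNIV. (BG B *v z)$i) + (\<Sum>i\<in>UNIV. (BL B *v z)$i)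
      = (\<Sum>j\<in>UNIV. z$j * ((\<Sum>i\<in>UNIV. B$Inl i$j) + (\<Sum>i\<in>UNIV. B$Inr i$j)))"
    by (simp add: matrix_vector_mult_def BG_def BL_def sum_distrib_left distrib_left sum.distrib
        mult.commute sum.swap[of _ "UNIV::'e set"])
  also have "\<dots> = 0" using col_zero[OF inc] by simp
  finally show ?thesis using z by simp
qed

lemma BS_bsalg:
  "BS B gam \<eta> = BG B ** (mat 1 - diagm (\<chi> k. gam$k * cos (\<eta>$k)) ** transpose (BL B)
      ** matrix_inv (BL B ** diagm (\<chi> k. gam$k * cos (\<eta>$k)) ** transpose (BL B)) ** BL B)"
  by (simp add: BS_def Gammap_diag)

lemma bsalg_at:
  fixes B :: "real^'e^('g::finite + 'l::finite)"
  assumes inc: "incidence_matrix B" and con: "connected_incidence B"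
    and gam: "\<forall>k. gam$k > 0" and eta: "\<eta> \<in> Omega"
  shows "bsalg (BL B) (\<chi> k. gam$k * cos (\<eta>$k))"
  unfolding bsalg_def using Y_invertible[OF inc con gam eta] by (simp add: Gammap_diag)



lemma vec_nth_deriv: "(f has_vector_derivative D) F \<Longrightarrow> ((\<lambda>t. f t $ k) has_real_derivative D $ k) F"
  using bounded_linear.has_vector_derivative[OF bounded_linear_vec_nth, of f D F k]
  by (simp add: has_real_derivative_iff_has_vector_derivative)

lemma mv_neg: "A *v (- x) = - (A *v (x::real^'n))"
  by (simp add: vec_eq_iff matrix_vector_mult_def sum_negf)

locale sys =
  fixes B :: "real^'e^('g::finite + 'l::finite)"
    and gam :: "real^'e" and Mv Av :: "real^'g"
    and ub :: "real^'g" and \<eta>b :: "real^'e" and \<omega>b :: "real^'g"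
  assumes inc: "incidence_matrix B" and con: "connected_incidence B"
    and gam: "\<forall>k. gam $ k > 0" and Mpos: "\<forall>i. Mv $ i > 0" and Apos: "\<forall>i. Av $ i > 0"
    and etab: "\<eta>b \<in> Omega" and etab_im: "\<eta>b \<in> imBT B"
    and eq: "is_equilibrium B gam Mv Av ub \<eta>b \<omega>b"
begin

lemma omegab_perp:
  assumes z: "BL B *v z = 0"
  shows "\<omega>b \<bullet> (BG B *v z) = 0"
proof -
  interpret b: bsalg "BL B" "BG B" "\<chi> k. gam$k * cos (\<eta>b$k)"
    using bsalg_at[OF inc con gam etab] .
  define g where "g = (\<chi> k. gam$k * cos (\<eta>b$k))"
  define z0 where "z0 = b.X *v (BL B *v (diagm g *v (transpose (BG B) *v \<omega>b)))"
  have "transpose (BS B gam \<eta>b) *v \<omega>b = 0" using eq by (simp add: is_equilibrium_def del: transpose_matrix_vector)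
  then have e0: "transpose (BG B) *v \<omega>b - transpose (BL B) *v z0 = 0"
    unfolding BS_bsalg b.BST_apply z0_def g_def .
  define y :: "real^('g+'l)" where "y = (\<chi> n. case n of Inl i \<Rightarrow> \<omega>b$i | Inr j \<Rightarrow> - (z0$j))"
  have "(\<chi> i. y$Inl i) = \<omega>b" "(\<chi> i. y$Inr i) = - z0" by (simp_all add: y_def vec_eq_iff)
  then have "transpose B *v y = 0" using e0
    by (simp add: BT_split[of B y] mv_neg del: transpose_matrix_vector)
  then have c: "\<omega>b$i = \<omega>b$undefined" for i using BT_const[OF inc con, of y "Inl i" "Inl undefined"]
    by (simp add: y_def)
  have "\<omega>b \<bullet> (BG B *v z) = (\<Sum>i\<in>UNIV. \<omega>b$undefined * (BG B *v z)$i)"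
    unfolding inner_vec_def by (rule sum.cong) (use c in auto)
  also have "\<dots> = \<omega>b$undefined * (\<Sum>i\<in>UNIV. (BG B *v z)$i)" by (simp add: sum_distrib_left)
  also have "\<dots> = 0" using sum_BG_zero[OF inc z] by simp
  finally show ?thesis .
qed

end



locale traj = sys +
  fixes \<eta> :: "real \<Rightarrow> real^'e" and \<omega> :: "real \<Rightarrow> real^'g"
  assumes sol: "is_solution B gam Mv Av ub \<eta> \<omega>"
    and inv0: "BL B *v (diagm gam *v vsin (\<eta> 0)) = BL B *v (diagm gam *v vsin \<eta>b)"
    and im0: "\<eta> 0 \<in> imBT B"
begin

definition "dd t = transpose (BS B gam (\<eta> t)) *v \<omega> t"
definition "W t = (SOME w'. (\<omega> has_vector_derivative w') (at t within {0..}) \<and>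
   diagm Mv *v w' = - (diagm Av *v \<omega> t) - (BG B ** diagm gam) *v vsin (\<eta> t) + ub)"
definition "gg t = (\<chi> k. gam$k * cos (\<eta> t $ k))"
definition "ee t = \<omega> t - \<omega>b"
definition "ss t = vsin (\<eta> t) - vsin \<eta>b"
definition "pp t = BG B *v (diagm gam *v ss t)"
definition "V t = (\<Sum>i\<in>UNIV. Mv$i/2 * (\<omega> t$i - \<omega>b$i)^2) + (\<Sum>k\<in>UNIV. gam$k * Uf (\<eta>b$k) (\<eta> t$k))"

lemma eta_Omega: "t \<ge> 0 \<Longrightarrow> \<eta> t \<in> Omega"
  using sol by (simp add: is_solution_def)

lemma eta_deriv: "t \<ge> 0 \<Longrightarrow> (\<eta> has_vector_derivative dd t) (at t within {0..})"
  using sol by (simp add: is_solution_def dd_def del: transpose_matrix_vector)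

lemma W_prop: "t \<ge> 0 \<Longrightarrow> (\<omega> has_vector_derivative W t) (at t within {0..}) \<and>
   diagm Mv *v W t = - (diagm Av *v \<omega> t) - (BG B ** diagm gam) *v vsin (\<eta> t) + ub"
  unfolding W_def by (rule someI_ex) (use sol in \<open>simp add: is_solution_def\<close>)

lemma W_deriv: "t \<ge> 0 \<Longrightarrow> (\<omega> has_vector_derivative W t) (at t within {0..})"
  using W_prop by blast

lemma W_eq: "t \<ge> 0 \<Longrightarrow> diagm Mv *v W t = - (diagm Av *v ee t) - pp t"
proof -
  assume t: "t \<ge> 0"
  have e: "- (diagm Av *v \<omega>b) - (BG B ** diagm gam) *v vsin \<eta>b + ub = 0"
    using eq by (simp add: is_equilibrium_def)
  have "diagm Mv *v W t = - (diagm Av *v \<omega> t) - (BG B ** diagm gam) *v vsin (\<eta> t) + ub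
      - (- (diagm Av *v \<omega>b) - (BG B ** diagm gam) *v vsin \<eta>b + ub)"
    using W_prop[OF t] e by simp
  also have "\<dots> = - (diagm Av *v ee t) - pp t"
    by (simp add: ee_def pp_def ss_def matrix_vector_mult_diff_distrib matrix_vector_mul_assoc
        algebra_simps)
  finally show ?thesis .
qed

lemma bs_t: "t \<ge> 0 \<Longrightarrow> bsalg (BL B) (gg t)"
  unfolding gg_def using bsalg_at[OF inc con gam eta_Omega] .

lemma inv_t:
  assumes t: "t \<ge> 0"
  shows "BL B *v (diagm gam *v vsin (\<eta> t)) = BL B *v (diagm gam *v vsin \<eta>b)"
proof -
  have "(BL B *v (diagm gam *v vsin (\<eta> t)))$j = (BL B *v (diagm gam *v vsin \<eta>b))$j" for j
  proof -
    define f where "f t = (\<Sum>k\<in>UNIV. BL B$j$k * (gam$k * sin (\<eta> t$k)))" for t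
    have fe: "f t = (BL B *v (diagm gam *v vsin (\<eta> t)))$j" for t
      unfolding diagm_mult_vec by (simp add: f_def matrix_vector_mult_def vsin_def)
    have "(f has_real_derivative 0) (at x within {0..})" if x: "x \<in> {0..}" for x
    proof -
      interpret b: bsalg "BL B" "BG B" "gg x" using bs_t x by simp
      have "(f has_real_derivative (\<Sum>k\<in>UNIV. BL B$j$k * (gam$k * (cos (\<eta> x$k) * dd x$k)))) (at x within {0..})"
        unfolding f_def
        by (intro DERIV_sum DERIV_cmult DERIV_chain2[OF DERIV_sin] vec_nth_deriv eta_deriv) (use x in auto)
      moreover have "(\<Sum>k\<in>UNIV. BL B$j$k * (gam$k * (cos (\<eta> x$k) * dd x$k))) = (BL B *v (diagm (gg x) *v dd x))$j"
        unfolding diagm_mult_vec by (simp add: matrix_vector_mult_def gg_def mult_ac)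
      moreover have "BL B *v (diagm (gg x) *v dd x) = 0"
        unfolding dd_def BS_bsalg gg_def[symmetric] by (rule b.BL_G_BST)
      ultimately show ?thesis by simp
    qed
    then obtain c where "\<forall>x\<in>{0..}. f x = c"
      using has_field_derivative_zero_constant[of "{0..}" f] by auto
    then have "f t = f 0" using t by auto
    then show ?thesis using inv0 fe by (metis)
  qed
  then show ?thesis by (simp add: vec_eq_iff)
qed

lemma BLs: "t \<ge> 0 \<Longrightarrow> BL B *v (diagm gam *v ss t) = 0"
  using inv_t by (simp add: ss_def matrix_vector_mult_diff_distrib)

lemma BS_s: "t \<ge> 0 \<Longrightarrow> BS B gam (\<eta> t) *v (diagm gam *v ss t) = pp t"
proof -
  assume t: "t \<ge> 0"
  interpret b: bsalg "BL B" "BG B" "gg t" using bs_t t by simp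
  show ?thesis unfolding BS_bsalg gg_def[symmetric] pp_def by (rule b.BS_apply_ker[OF BLs[OF t]])
qed

lemma V_deriv:
  assumes t: "t \<ge> 0"
  shows "(V has_real_derivative - (ee t \<bullet> (diagm Av *v ee t))) (at t within {0..})"
proof -
  have "(V has_real_derivative (\<Sum>i\<in>UNIV. Mv$i/2 * (2 * (\<omega> t$i - \<omega>b$i) * W t$i))
      + (\<Sum>k\<in>UNIV. gam$k * ((sin (\<eta> t$k) - sin (\<eta>b$k)) * dd t$k))) (at t within {0..})"
    unfolding V_def
    apply (intro DERIV_add DERIV_sum DERIV_cmult DERIV_chain2[OF Uf_deriv] vec_nth_deriv eta_deriv)
     apply (rule DERIV_chain2[where f="\<lambda>x. x^2", OF DERIV_pow[where n=2, THEN DERIV_cong]])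
      apply simp
    apply (intro derivative_eq_intros vec_nth_deriv W_deriv t)
    using t by (auto intro: vec_nth_deriv[OF W_deriv[OF t]])
  moreover have "(\<Sum>i\<in>UNIV. Mv$i/2 * (2 * (\<omega> t$i - \<omega>b$i) * W t$i)) = ee t \<bullet> (diagm Mv *v W t)"
    unfolding inner_diagm ee_def by (rule sum.cong) (auto simp: algebra_simps)
  moreover have "(\<Sum>k\<in>UNIV. gam$k * ((sin (\<eta> t$k) - sin (\<eta>b$k)) * dd t$k)) = (diagm gam *v ss t) \<bullet> dd t"
    by (simp add: inner_vec_def diagm_nth ss_def vsin_def mult_ac)
  moreover have "(diagm gam *v ss t) \<bullet> dd t = pp t \<bullet> \<omega> t"
    unfolding dd_def inner_mat_left transpose_transpose BS_s[OF t] ..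
  ultimately have D: "(V has_real_derivative ee t \<bullet> (diagm Mv *v W t) + pp t \<bullet> \<omega> t) (at t within {0..})"
    by simp
  have o: "\<omega>b \<bullet> pp t = 0" unfolding pp_def by (rule omegab_perp[OF BLs[OF t]])
  have w: "\<omega> t = ee t + \<omega>b" by (simp add: ee_def)
  have e1: "ee t \<bullet> (diagm Mv *v W t) = - (ee t \<bullet> (diagm Av *v ee t)) - ee t \<bullet> pp t"
    unfolding W_eq[OF t] by (simp add: inner_diff_right inner_minus_right)
  have e2: "pp t \<bullet> \<omega> t = ee t \<bullet> pp t"
    unfolding w inner_add_right using o inner_commute[of "pp t" "ee t"] inner_commute[of "pp t" \<omega>b] by simp
  show ?thesis using D unfolding e1 e2 by simp
qed

end



lemma Min_range_le: "Min (range (f::'a::finite \<Rightarrow> real)) \<le> f k"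
  by (rule Min_le) auto
lemma Min_range_pos: "(\<And>k. f k > 0) \<Longrightarrow> Min (range (f::'a::finite \<Rightarrow> real)) > 0"
  by (subst Min_gr_iff) auto
lemma Max_range_ge: "Max (range (f::'a::finite \<Rightarrow> real)) \<ge> f k"
  by (rule Max_ge) auto
lemma Max_range_lt: "(\<And>k. f k < c) \<Longrightarrow> Max (range (f::'a::finite \<Rightarrow> real)) < c"
  by (subst Max_less_iff) auto

lemma mv_bound: "\<exists>K>0. \<forall>x. norm ((A::real^'n^'m) *v x) \<le> K * norm x"
  using bounded_linear.pos_bounded[OF matrix_vector_mul_bounded_linear[of A]]
  by (auto simp: mult.commute)

lemma norm_sq_sum: "(norm (x::real^'n))^2 = (\<Sum>i\<in>UNIV. x$i * x$i)"
  by (simp add: power2_norm_eq_inner inner_vec_def)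

context sys begin

definition "del = Min (range (\<lambda>k. gam$k * mU (\<eta>b$k)))"
definition "rr = Max (range (\<lambda>k. \<bar>\<eta>b$k\<bar> + rho (\<eta>b$k)))"
definition "c0 = cos rr"
definition "gmin = Min (range (\<lambda>k. gam$k))"
definition "gmax = Max (range (\<lambda>k. gam$k))"
definition "mmin = Min (range (\<lambda>i. Mv$i))"
definition "amin = Min (range (\<lambda>i. Av$i))"

lemma etab_k: "\<bar>\<eta>b$k\<bar> < pi/2" using etab by (simp add: Omega_def)

lemma del_pos: "del > 0"
  unfolding del_def using gam mU_pos[OF etab_k] by (intro Min_range_pos) auto

lemma del_le: "del \<le> gam$k * mU (\<eta>b$k)"
  unfolding del_def by (rule Min_range_le)

lemma rr_lt: "rr < pi/2"
  unfolding rr_def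
proof (rule Max_range_lt)
  fix k
  have "\<bar>\<eta>b$k\<bar> < pi/2" by (rule etab_k)
  then show "\<bar>\<eta>b$k\<bar> + rho (\<eta>b$k) < pi/2" unfolding rho_def by argo
qed

lemma rr_ge: "\<bar>\<eta>b$k\<bar> + rho (\<eta>b$k) \<le> rr"
  unfolding rr_def by (rule Max_range_ge)

lemma rr_nonneg: "rr \<ge> 0"
  using rr_ge[of undefined] rho_facts(1)[OF etab_k[of undefined]] by linarith

lemma c0_pos: "c0 > 0"
  unfolding c0_def using rr_lt rr_nonneg by (intro cos_gt_zero_pi) auto

lemma cos_ge_c0: "\<bar>x\<bar> \<le> rr \<Longrightarrow> cos x \<ge> c0"
  unfolding c0_def using rr_lt by (subst cos_abs_real[symmetric]) (rule cos_monotone_0_pi_le, auto)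

lemma gmin_pos: "gmin > 0" unfolding gmin_def using gam by (intro Min_range_pos) auto
lemma gmin_le: "gmin \<le> gam$k" unfolding gmin_def by (rule Min_range_le)
lemma gmax_ge: "gam$k \<le> gmax" unfolding gmax_def by (rule Max_range_ge)
lemma mmin_pos: "mmin > 0" unfolding mmin_def using Mpos by (intro Min_range_pos) auto
lemma mmin_le: "mmin \<le> Mv$k" unfolding mmin_def by (rule Min_range_le)
lemma amin_pos: "amin > 0" unfolding amin_def using Apos by (intro Min_range_pos) auto
lemma amin_le: "amin \<le> Av$k" unfolding amin_def by (rule Min_range_le)

lemma quad_lower:
  assumes "\<And>k. m \<le> v$k" "m \<ge> 0"
  shows "m * (norm x)^2 \<le> x \<bullet> (diagm v *v x)"
proof -
  have "m * (norm x)^2 = (\<Sum>i\<in>UNIV. m * x$i * x$i)" by (simp add: norm_sq_sum sum_distrib_left mult.assoc)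
  also have "\<dots> \<le> (\<Sum>i\<in>UNIV. v$i * x$i * x$i)"
    by (intro sum_mono) (metis assms(1) mult.assoc mult_right_mono zero_le_square)
  finally show ?thesis by (simp add: inner_diagm)
qed

lemma quad_upper:
  assumes "\<And>k. v$k \<le> m"
  shows "x \<bullet> (diagm v *v x) \<le> m * (norm x)^2"
proof -
  have "x \<bullet> (diagm v *v x) = (\<Sum>i\<in>UNIV. v$i * x$i * x$i)" by (simp add: inner_diagm)
  also have "\<dots> \<le> (\<Sum>i\<in>UNIV. m * x$i * x$i)"
    by (intro sum_mono) (metis assms(1) mult.assoc mult_right_mono zero_le_square)
  also have "\<dots> = m * (norm x)^2" by (simp add: norm_sq_sum sum_distrib_left mult.assoc)
  finally show ?thesis .
qed

end

locale traj2 = traj +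
  assumes V0: "V 0 < del"
begin

lemma V_mono: "0 \<le> s \<Longrightarrow> s \<le> t \<Longrightarrow> V t \<le> V s"
  using deriv_bound_real[of V "\<lambda>t. - (ee t \<bullet> (diagm Av *v ee t))" s t 0] V_deriv
    inner_diagm_self_nonneg[of Av] Apos by (force simp: less_imp_le)

lemma V_lt: "t \<ge> 0 \<Longrightarrow> V t < del"
  using V_mono[of 0 t] V0 by simp

lemma part1_nonneg: "(\<Sum>i\<in>UNIV. Mv$i/2 * (\<omega> t$i - \<omega>b$i)^2) \<ge> 0"
  using Mpos by (intro sum_nonneg) (simp add: less_imp_le)

lemma Uf_t_nonneg: "t \<ge> 0 \<Longrightarrow> Uf (\<eta>b$k) (\<eta> t$k) \<ge> 0"
  using eta_Omega[of t] etab_k[of k] by (intro Uf_nonneg) (auto simp: Omega_def less_imp_le)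

lemma part2_nonneg: "t \<ge> 0 \<Longrightarrow> (\<Sum>k\<in>UNIV. gam$k * Uf (\<eta>b$k) (\<eta> t$k)) \<ge> 0"
  using gam Uf_t_nonneg by (intro sum_nonneg) (simp add: less_imp_le)

lemma region: "t \<ge> 0 \<Longrightarrow> \<bar>\<eta> t$k - \<eta>b$k\<bar> < rho (\<eta>b$k)"
proof -
  assume t: "t \<ge> 0"
  have "gam$k * Uf (\<eta>b$k) (\<eta> t$k) \<le> (\<Sum>k\<in>UNIV. gam$k * Uf (\<eta>b$k) (\<eta> t$k))"
    using gam Uf_t_nonneg[OF t] by (intro member_le_sum) (auto simp: less_imp_le)
  also have "\<dots> \<le> V t" unfolding V_def using part1_nonneg[of t] by linarith
  also have "\<dots> < gam$k * mU (\<eta>b$k)" using V_lt[OF t] del_le[of k] by linarith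
  finally have "Uf (\<eta>b$k) (\<eta> t$k) < mU (\<eta>b$k)" using gam by auto
  then show ?thesis
    using eta_Omega[OF t] etab_k[of k] by (intro Uf_small) (auto simp: Omega_def)
qed

lemma eta_rr: "t \<ge> 0 \<Longrightarrow> \<bar>\<eta> t$k\<bar> \<le> rr"
  using region[of t k] rr_ge[of k] by argo

lemma cos_t: "t \<ge> 0 \<Longrightarrow> cos (\<eta> t$k) \<ge> c0"
  using cos_ge_c0 eta_rr by blast

definition "Ebd = sqrt (2 * del / mmin)"

lemma ee_bound: "t \<ge> 0 \<Longrightarrow> norm (ee t) \<le> Ebd"
proof -
  assume t: "t \<ge> 0"
  have "mmin * (norm (ee t))^2 \<le> ee t \<bullet> (diagm Mv *v ee t)"
    using mmin_le mmin_pos by (intro quad_lower) (auto simp: less_imp_le)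
  also have "\<dots> = 2 * (\<Sum>i\<in>UNIV. Mv$i/2 * (\<omega> t$i - \<omega>b$i)^2)"
    by (simp add: inner_diagm ee_def sum_distrib_left power2_eq_square mult_ac)
  also have "\<dots> \<le> 2 * V t" using part2_nonneg[OF t] by (simp add: V_def)
  also have "\<dots> < 2 * del" using V_lt[OF t] by simp
  finally have "(norm (ee t))^2 \<le> 2 * del / mmin" using mmin_pos by (simp add: field_simps)
  then show ?thesis unfolding Ebd_def by (rule real_le_rsqrt)
qed

definition "Rs = (\<Sum>k\<in>UNIV. rho (\<eta>b$k))"

lemma eta_dist: "t \<ge> 0 \<Longrightarrow> norm (\<eta> t - \<eta>b) \<le> Rs"
proof -
  assume t: "t \<ge> 0"
  have "norm (\<eta> t - \<eta>b) \<le> (\<Sum>k\<in>UNIV. \<bar>(\<eta> t - \<eta>b)$k\<bar>)" by (rule norm_le_l1_cart)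
  also have "\<dots> \<le> Rs" unfolding Rs_def using region[OF t] by (intro sum_mono) (simp add: less_imp_le)
  finally show ?thesis .
qed

lemma vsin_lip: "norm (vsin x - vsin y) \<le> norm (x - y)"
  by (rule norm_le_componentwise_cart) (simp add: vsin_def sin_lip)

lemma ss_bound: "t \<ge> 0 \<Longrightarrow> norm (ss t) \<le> Rs"
  using vsin_lip[of "\<eta> t" \<eta>b] eta_dist[of t] by (simp add: ss_def)

lemma W_formula: "t \<ge> 0 \<Longrightarrow> W t = diagm (\<chi> i. 1 / Mv$i) *v (- (diagm Av *v ee t) - pp t)"
proof -
  assume t: "t \<ge> 0"
  have "diagm (\<chi> i. 1 / Mv$i) *v (diagm Mv *v W t) = W t"
    using Mpos by (simp add: diagm_mult_vec vec_eq_iff less_imp_neq[symmetric])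
  then show ?thesis using W_eq[OF t] by simp
qed

lemma W_bound: "\<exists>L>0. \<forall>t\<ge>0. norm (W t) \<le> L"
proof -
  obtain K1 where K1: "K1 > 0" "\<forall>x. norm (diagm (\<chi> i. 1 / Mv$i) *v x) \<le> K1 * norm x" using mv_bound by blast
  obtain K2 where K2: "K2 > 0" "\<forall>x. norm (diagm Av *v x) \<le> K2 * norm x" using mv_bound by blast
  obtain K3 where K3: "K3 > 0" "\<forall>x. norm ((BG B ** diagm gam) *v x) \<le> K3 * norm x" using mv_bound by blast
  have "norm (W t) \<le> K1 * (K2 * Ebd + K3 * Rs)" if t: "t \<ge> 0" for t
  proof -
    have "norm (W t) \<le> K1 * norm (- (diagm Av *v ee t) - pp t)" using W_formula[OF t] K1 by simp
    also have "norm (- (diagm Av *v ee t) - pp t) \<le> norm (diagm Av *v ee t) + norm (pp t)"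
      by (metis norm_diff_ineq norm_minus_cancel norm_triangle_ineq4 add.commute diff_conv_add_uminus norm_triangle_ineq)
    also have "norm (pp t) \<le> K3 * norm (ss t)"
      using K3(2) by (simp add: pp_def matrix_vector_mul_assoc)
    also have "norm (diagm Av *v ee t) \<le> K2 * norm (ee t)" using K2 by simp
    finally have "norm (W t) \<le> K1 * (K2 * norm (ee t) + K3 * norm (ss t))"
      using K1 by (simp add: mult_left_mono)
    also have "\<dots> \<le> K1 * (K2 * Ebd + K3 * Rs)"
      using ee_bound[OF t] ss_bound[OF t] K1 K2 K3
      by (intro mult_left_mono add_mono) auto
    finally show ?thesis .
  qed
  moreover have "Ebd \<ge> 0" using ee_bound[of 0] norm_ge_zero[of "ee 0"] by linarith
  moreover have "Rs \<ge> 0" using ss_bound[of 0] norm_ge_zero[of "ss 0"] by linarith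
  ultimately have "K1 * (K2 * Ebd + K3 * Rs) \<ge> 0" "\<forall>t\<ge>0. norm (W t) \<le> K1 * (K2 * Ebd + K3 * Rs)"
    using K1 K2 K3 by auto
  then show ?thesis
    by (intro exI[of _ "K1 * (K2 * Ebd + K3 * Rs) + 1"]) force
qed

end



context traj2 begin

lemma dd_bound: "\<exists>L>0. \<forall>t\<ge>0. norm (dd t) \<le> L"
proof -
  obtain K4 where K4: "K4 > 0" "\<forall>x. norm (transpose (BG B) *v x) \<le> K4 * norm x" using mv_bound by blast
  define Q where "Q = gmax * (K4 * (norm \<omega>b + Ebd))^2 / (gmin * c0)"
  have "norm (dd t) \<le> sqrt Q" if t: "t \<ge> 0" for t
  proof -
    interpret b: bsalg "BL B" "BG B" "gg t" using bs_t t by simp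
    have ggl: "gmin * c0 \<le> gg t $ k" for k
      using gmin_le[of k] cos_t[OF t, of k] gmin_pos c0_pos unfolding gg_def
      by (simp add: mult_mono)
    have ggu: "gg t $ k \<le> gmax" for k
    proof -
      have "gam$k * cos (\<eta> t$k) \<le> gam$k * 1" using gam by (intro mult_left_mono) (auto simp: less_imp_le)
      then show ?thesis using gmax_ge[of k] by (simp add: gg_def)
    qed
    have gnn: "\<forall>k. gg t $ k \<ge> 0" using ggl gmin_pos c0_pos
      by (meson less_imp_le mult_pos_pos order.trans)
    define v where "v = transpose (BG B) *v \<omega> t"
    have "gmin * c0 * (norm (dd t))^2 \<le> dd t \<bullet> (diagm (gg t) *v dd t)"
      using ggl gmin_pos c0_pos by (intro quad_lower) auto
    also have "\<dots> \<le> v \<bullet> (diagm (gg t) *v v)"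
      using b.proj_bound[OF gnn, of "\<omega> t"] unfolding dd_def BS_bsalg gg_def[symmetric] v_def .
    also have "\<dots> \<le> gmax * (norm v)^2" using ggu by (rule quad_upper)
    also have "norm v \<le> K4 * (norm \<omega>b + Ebd)"
    proof -
      have "norm v \<le> K4 * norm (\<omega> t)" using K4 by (simp add: v_def del: transpose_matrix_vector)
      also have "norm (\<omega> t) \<le> norm \<omega>b + Ebd"
        using ee_bound[OF t] norm_triangle_ineq[of "ee t" \<omega>b] by (simp add: ee_def)
      finally show ?thesis using K4 by (simp add: mult_left_mono)
    qed
    then have "gmax * (norm v)^2 \<le> gmax * (K4 * (norm \<omega>b + Ebd))^2"
      using gmin_pos gmin_le[of undefined] gmax_ge[of undefined]
      by (intro mult_left_mono power_mono) auto
    finally have "(norm (dd t))^2 \<le> Q"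
      unfolding Q_def using gmin_pos c0_pos by (simp add: field_simps)
    then show ?thesis by (rule real_le_rsqrt)
  qed
  note bnd = this
  have sq: "sqrt Q \<ge> 0" using bnd[of 0] norm_ge_zero[of "dd 0"] by linarith
  show ?thesis
  proof (intro exI[of _ "sqrt Q + 1"] conjI allI impI)
    show "0 < sqrt Q + 1" using sq by linarith
    fix t :: real assume "t \<ge> 0"
    then show "norm (dd t) \<le> sqrt Q + 1" using bnd[of t] by linarith
  qed
qed

lemma V_lb: "t \<ge> 0 \<Longrightarrow> V t \<ge> 0"
  using part1_nonneg[of t] part2_nonneg[of t] by (simp add: V_def)

lemma step1: "\<kappa> > 0 \<Longrightarrow> \<exists>T\<ge>0. \<forall>t\<ge>T. norm (ee t) < \<kappa>"
proof -
  assume k: "\<kappa> > 0"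
  obtain LW where LW: "LW > 0" "\<forall>t\<ge>0. norm (W t) \<le> LW" using W_bound by blast
  define h where "h = \<kappa> / (2 * LW)"
  have h: "h > 0" using k LW by (simp add: h_def)
  define c where "c = amin * (\<kappa>/2)^2 * h"
  have c: "c > 0" using amin_pos k h by (simp add: c_def)
  obtain T where T: "T \<ge> 0" "\<forall>t\<ge>T. \<forall>h\<ge>0. V t - V (t + h) < c"
    using mono_cauchy[of V c] V_mono V_lb c by blast
  have "norm (ee t) < \<kappa>" if t: "t \<ge> T" for t
  proof (rule ccontr)
    assume "\<not> norm (ee t) < \<kappa>"
    then have big: "norm (ee t) \<ge> \<kappa>" by simp
    have t0: "t \<ge> 0" using t T by simp
    have "V (t + h) - V t \<le> (- (amin * (\<kappa>/2)^2)) * (t + h - t)"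
    proof (rule deriv_bound_real[OF V_deriv])
      fix \<tau> assume \<tau>: "t \<le> \<tau>" "\<tau> \<le> t + h"
      have "norm (\<omega> \<tau> - \<omega> t) \<le> LW * (\<tau> - t)"
        using deriv_bound_vec[OF W_deriv, of t \<tau> LW] LW \<tau> t0 by auto
      also have "\<dots> \<le> LW * h" using \<tau> LW by (intro mult_left_mono) auto
      also have "\<dots> = \<kappa>/2" using LW by (simp add: h_def)
      finally have "norm (ee \<tau> - ee t) \<le> \<kappa>/2" by (simp add: ee_def)
      then have "norm (ee \<tau>) \<ge> \<kappa>/2" using big norm_triangle_ineq2[of "ee t" "ee \<tau>"]
        by (simp add: norm_minus_commute)
      then have "(\<kappa>/2)^2 \<le> (norm (ee \<tau>))^2" using k by (intro power_mono) auto
      then have "amin * (\<kappa>/2)^2 \<le> amin * (norm (ee \<tau>))^2" using amin_pos by simp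
      also have "\<dots> \<le> ee \<tau> \<bullet> (diagm Av *v ee \<tau>)"
        using amin_le amin_pos by (intro quad_lower) (auto simp: less_imp_le)
      finally show "- (ee \<tau> \<bullet> (diagm Av *v ee \<tau>)) \<le> - (amin * (\<kappa>/2)^2)" by simp
    qed (use t0 h in auto)
    then have "V t - V (t + h) \<ge> c" by (simp add: c_def)
    moreover have "V t - V (t + h) < c" using T t h by auto
    ultimately show False by simp
  qed
  then show ?thesis using T by blast
qed

end



lemma diag_sym: "a \<bullet> (diagm v *v b) = b \<bullet> (diagm v *v a)"
  by (simp add: inner_diagm mult_ac)

context traj2 begin

lemma pp_lip:
  assumes L: "\<forall>t\<ge>0. norm (dd t) \<le> Ld" and K3: "\<forall>x. norm ((BG B ** diagm gam) *v x) \<le> K3 * norm x"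
    and K3p: "K3 > 0" and t: "0 \<le> t" "t \<le> \<tau>"
  shows "norm (pp \<tau> - pp t) \<le> K3 * Ld * (\<tau> - t)"
proof -
  have "pp \<tau> - pp t = (BG B ** diagm gam) *v (vsin (\<eta> \<tau>) - vsin (\<eta> t))"
    by (simp add: pp_def ss_def matrix_vector_mul_assoc matrix_vector_mult_diff_distrib)
  then have "norm (pp \<tau> - pp t) \<le> K3 * norm (vsin (\<eta> \<tau>) - vsin (\<eta> t))" using K3 by simp
  also have "\<dots> \<le> K3 * norm (\<eta> \<tau> - \<eta> t)" using vsin_lip K3p by (simp add: mult_left_mono)
  also have "norm (\<eta> \<tau> - \<eta> t) \<le> Ld * (\<tau> - t)"
    using deriv_bound_vec[OF eta_deriv, of t \<tau> Ld] L t by auto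
  finally show ?thesis using K3p by (simp add: mult_left_mono mult.assoc)
qed

lemma step2: "\<kappa> > 0 \<Longrightarrow> \<exists>T\<ge>0. \<forall>t\<ge>T. norm (pp t) < \<kappa>"
proof -
  assume k: "\<kappa> > 0"
  obtain Ld where Ld: "Ld > 0" "\<forall>t\<ge>0. norm (dd t) \<le> Ld" using dd_bound by blast
  obtain K3 where K3: "K3 > 0" "\<forall>x. norm ((BG B ** diagm gam) *v x) \<le> K3 * norm x" using mv_bound by blast
  obtain KA where KA: "KA > 0" "\<forall>x. norm (diagm Av *v x) \<le> KA * norm x" using mv_bound by blast
  obtain KM where KM: "KM > 0" "\<forall>x. norm (diagm Mv *v x) \<le> KM * norm x" using mv_bound by blast
  define h where "h = \<kappa> / (4 * K3 * Ld)"
  have h: "h > 0" using k K3 Ld by (simp add: h_def)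
  define \<xi> where "\<xi> = min (\<kappa> / (4 * KA)) (\<kappa> * h / (8 * KM))"
  have \<xi>: "\<xi> > 0" using k KA KM h by (simp add: \<xi>_def)
  obtain T where T: "T \<ge> 0" "\<forall>t\<ge>T. norm (ee t) < \<xi>" using step1[OF \<xi>] by blast
  have "norm (pp t) < \<kappa>" if t: "t \<ge> T" for t
  proof (rule ccontr)
    assume "\<not> norm (pp t) < \<kappa>"
    then have big: "norm (pp t) \<ge> \<kappa>" by simp
    define P where "P = pp t"
    have t0: "t \<ge> 0" using t T by simp
    define \<phi> where "\<phi> s = \<omega> s \<bullet> (diagm Mv *v P)" for s
    have \<phi>d: "(\<phi> has_real_derivative (W s \<bullet> (diagm Mv *v P))) (at s within {0..})" if "s \<ge> 0" for s
      unfolding \<phi>_def has_real_derivative_iff_has_vector_derivative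
      by (rule bounded_linear.has_vector_derivative[OF bounded_linear_inner_left W_deriv[OF that]])
    have "\<phi> (t + h) - \<phi> t \<le> (- ((norm P)^2 / 2)) * (t + h - t)"
    proof (rule deriv_bound_real[OF \<phi>d])
      fix \<tau> assume \<tau>: "t \<le> \<tau>" "\<tau> \<le> t + h"
      have \<tau>0: "\<tau> \<ge> 0" using \<tau> t0 by simp
      have "W \<tau> \<bullet> (diagm Mv *v P) = (diagm Mv *v W \<tau>) \<bullet> P"
        using diag_sym[of "W \<tau>" Mv P] by (simp add: inner_commute)
      also have "\<dots> = - ((diagm Av *v ee \<tau>) \<bullet> P) - P \<bullet> P - (pp \<tau> - P) \<bullet> P"
        using W_eq[OF \<tau>0] by (simp add: inner_diff_left)
      finally have eqW: "W \<tau> \<bullet> (diagm Mv *v P) = - ((diagm Av *v ee \<tau>) \<bullet> P) - P \<bullet> P - (pp \<tau> - P) \<bullet> P" .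
      have h1: "- ((diagm Av *v ee \<tau>) \<bullet> P) \<le> \<kappa>/4 * norm P"
      proof -
        have "- ((diagm Av *v ee \<tau>) \<bullet> P) \<le> norm (diagm Av *v ee \<tau>) * norm P"
          using norm_cauchy_schwarz[of "- (diagm Av *v ee \<tau>)" P] by simp
        also have "\<dots> \<le> KA * norm (ee \<tau>) * norm P" using KA by (simp add: mult_right_mono)
        also have "KA * norm (ee \<tau>) \<le> \<kappa>/4"
        proof -
          have "norm (ee \<tau>) < \<xi>" using T \<tau> t by auto
          moreover have "\<xi> \<le> \<kappa> / (4 * KA)" unfolding \<xi>_def by (rule min.cobounded1)
          ultimately have "norm (ee \<tau>) \<le> \<kappa> / (4 * KA)" by linarith
          then show ?thesis using KA by (simp add: field_simps)
        qed
        finally show ?thesis by (simp add: mult_right_mono)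
      qed
      have h2: "- ((pp \<tau> - P) \<bullet> P) \<le> \<kappa>/4 * norm P"
      proof -
        have "- ((pp \<tau> - P) \<bullet> P) \<le> norm (pp \<tau> - P) * norm P"
          using norm_cauchy_schwarz[of "- (pp \<tau> - P)" P] by (simp only: norm_minus_cancel inner_minus_left)
        also have "norm (pp \<tau> - P) \<le> K3 * Ld * (\<tau> - t)"
          unfolding P_def by (rule pp_lip[OF Ld(2) K3(2) K3(1) t0 \<tau>(1)])
        also have "K3 * Ld * (\<tau> - t) \<le> K3 * Ld * h" using \<tau> K3 Ld by (intro mult_left_mono) auto
        also have "K3 * Ld * h = \<kappa>/4" using K3 Ld by (simp add: h_def)
        finally show ?thesis by (simp add: mult_right_mono)
      qed
      have "W \<tau> \<bullet> (diagm Mv *v P) \<le> \<kappa>/2 * norm P - (norm P)^2"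
        using eqW h1 h2 power2_norm_eq_inner[of P] by linarith
      also have "\<dots> \<le> - ((norm P)^2 / 2)"
      proof -
        have "\<kappa> * norm P \<le> norm P * norm P" using big by (simp add: P_def mult_right_mono)
        then show ?thesis unfolding power2_eq_square by linarith
      qed
      finally show "W \<tau> \<bullet> (diagm Mv *v P) \<le> - ((norm P)^2 / 2)" .
    qed (use t0 h in auto)
    moreover have "\<phi> (t + h) - \<phi> t \<ge> - (2 * \<xi> * (KM * norm P))"
    proof -
      have e1: "\<phi> (t + h) - \<phi> t = (ee (t + h) - ee t) \<bullet> (diagm Mv *v P)"
        by (simp add: \<phi>_def ee_def inner_diff_left)
      have e2: "(ee (t + h) - ee t) \<bullet> (diagm Mv *v P) \<ge> - (norm (ee (t + h) - ee t) * norm (diagm Mv *v P))"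
        using norm_cauchy_schwarz[of "- (ee (t + h) - ee t)" "diagm Mv *v P"]
        by (simp only: norm_minus_cancel inner_minus_left)
      have e3: "norm (ee (t + h) - ee t) \<le> 2 * \<xi>"
      proof -
        have "norm (ee (t+h)) < \<xi>" "norm (ee t) < \<xi>" using T t h by auto
        then show ?thesis using norm_triangle_ineq4[of "ee (t+h)" "ee t"] by linarith
      qed
      have e4: "norm (diagm Mv *v P) \<le> KM * norm P" using KM by simp
      have "norm (ee (t + h) - ee t) * norm (diagm Mv *v P) \<le> (2 * \<xi>) * (KM * norm P)"
        using e3 e4 \<xi> by (intro mult_mono) auto
      with e1 e2 show ?thesis by linarith
    qed
    ultimately have "(norm P)^2 / 2 * h \<le> 2 * \<xi> * KM * norm P" by simp
    then have "(norm P * h / 2) * norm P \<le> (2 * \<xi> * KM) * norm P"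
      by (simp add: power2_eq_square mult_ac)
    moreover have "norm P > 0" using big k unfolding P_def by linarith
    ultimately have "norm P * h / 2 \<le> 2 * \<xi> * KM"
      by (meson mult_right_le_imp_le)
    moreover have "2 * \<xi> * KM \<le> \<kappa> * h / 4"
    proof -
      have "\<xi> \<le> \<kappa> * h / (8 * KM)" by (simp add: \<xi>_def)
      then show ?thesis using KM by (simp add: field_simps)
    qed
    ultimately have "norm P * h \<le> \<kappa> * h / 2" by simp
    then have "norm P \<le> \<kappa> / 2" using h by (simp add: field_simps)
    then show False using big k by (simp add: P_def)
  qed
  then show ?thesis using T by blast
qed

end



context sys begin

definition "FF x = (BG B *v x, BL B *v x)"
definition "SK = {x. FF x = 0}"

lemma FF_bl: "bounded_linear FF"
  unfolding FF_def by (intro bounded_linear_Pair matrix_vector_mul_bounded_linear)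

lemma SK_sub: "subspace SK"
  unfolding subspace_def SK_def using bounded_linear.linear[OF FF_bl]
  by (simp add: linear_0 linear_add linear_scale)

lemma SK_iff: "x \<in> SK \<longleftrightarrow> BG B *v x = 0 \<and> BL B *v x = 0"
  by (simp add: SK_def FF_def zero_prod_def)

lemma B_zero: "x \<in> SK \<Longrightarrow> B *v x = 0"
proof -
  assume x: "x \<in> SK"
  have "(B *v x)$n = 0" for n
  proof (cases n)
    case (Inl i)
    have "(B *v x)$n = (BG B *v x)$i" by (simp add: Inl matrix_vector_mult_def BG_def)
    then show ?thesis using x by (simp add: SK_iff)
  next
    case (Inr i)
    have "(B *v x)$n = (BL B *v x)$i" by (simp add: Inr matrix_vector_mult_def BL_def)
    then show ?thesis using x by (simp add: SK_iff)
  qed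
  then show ?thesis by (simp add: vec_eq_iff)
qed

lemma perp_im: "x \<in> SK \<Longrightarrow> y \<in> imBT B \<Longrightarrow> x \<bullet> y = 0"
proof -
  assume x: "x \<in> SK" and y: "y \<in> imBT B"
  then obtain z where z: "y = transpose B *v z" by (auto simp: imBT_def)
  have "x \<bullet> y = (B *v x) \<bullet> z" unfolding z inner_mat_left transpose_transpose ..
  then show ?thesis using B_zero[OF x] by simp
qed

lemma iso: "\<exists>e>0. \<forall>x\<in>orthogonal_comp SK. e * norm x \<le> norm (FF x)"
proof -
  have "\<exists>e>0. \<forall>x\<in>orthogonal_comp SK. norm (FF x) \<ge> e * norm x"
  proof (rule injective_imp_isometric)
    show "closed (orthogonal_comp SK)" by (rule closed_subspace[OF subspace_orthogonal_comp])
    show "subspace (orthogonal_comp SK)" by (rule subspace_orthogonal_comp)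
    show "bounded_linear FF" by (rule FF_bl)
    show "\<forall>x\<in>orthogonal_comp SK. FF x = 0 \<longrightarrow> x = 0"
    proof (intro ballI impI)
      fix x assume x: "x \<in> orthogonal_comp SK" "FF x = 0"
      then have "x \<in> SK" by (simp add: SK_def)
      then have "orthogonal x x" using x(1) by (simp add: orthogonal_comp_def)
      then show "x = 0" by (simp add: orthogonal_def)
    qed
  qed
  then show ?thesis by auto
qed

end

context traj2 begin

lemma perp_eta:
  assumes x: "x \<in> SK" and t: "t \<ge> 0"
  shows "x \<bullet> (\<eta> t - \<eta>b) = 0"
proof -
  define f where "f s = x \<bullet> \<eta> s" for s
  have "(f has_real_derivative 0) (at s within {0..})" if s: "s \<in> {0..}" for s
  proof -
    interpret b: bsalg "BL B" "BG B" "gg s" using bs_t s by simp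
    have "(f has_real_derivative x \<bullet> dd s) (at s within {0..})"
      unfolding f_def has_real_derivative_iff_has_vector_derivative
      by (rule bounded_linear.has_vector_derivative[OF bounded_linear_inner_right eta_deriv]) (use s in auto)
    moreover have "x \<bullet> dd s = (BS B gam (\<eta> s) *v x) \<bullet> \<omega> s"
      unfolding dd_def inner_mat_left transpose_transpose ..
    moreover have "BS B gam (\<eta> s) *v x = BG B *v x"
      unfolding BS_bsalg gg_def[symmetric] by (rule b.BS_apply_ker) (use x in \<open>simp add: SK_iff\<close>)
    ultimately show ?thesis using x by (simp add: SK_iff)
  qed
  then obtain c where "\<forall>s\<in>{0..}. f s = c"
    using has_field_derivative_zero_constant[of "{0..}" f] by auto
  then have "f t = f 0" using t by auto
  moreover have "f 0 = 0" unfolding f_def by (rule perp_im[OF x im0])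
  moreover have "x \<bullet> \<eta>b = 0" by (rule perp_im[OF x etab_im])
  ultimately show ?thesis by (simp add: f_def inner_diff_right)
qed

lemma eta_pp: "\<exists>e>0. \<forall>t\<ge>0. e * norm (\<eta> t - \<eta>b) \<le> norm (pp t)"
proof -
  obtain e where e: "e > 0" "\<forall>x\<in>orthogonal_comp SK. e * norm x \<le> norm (FF x)" using iso by blast
  have "gmin * c0 * e * norm (\<eta> t - \<eta>b) \<le> norm (pp t)" if t: "t \<ge> 0" for t
  proof -
    define u where "u = diagm gam *v ss t"
    define \<Delta> where "\<Delta> = \<eta> t - \<eta>b"
    obtain y z where yz: "y \<in> span SK" "\<And>w. w \<in> span SK \<Longrightarrow> orthogonal z w" "u = y + z"
      using orthogonal_subspace_decomp_exists[of SK u] by blast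
    have yS: "y \<in> SK" using yz(1) SK_sub by (metis span_eq_iff)
    have zS: "z \<in> orthogonal_comp SK"
      using yz(2) SK_sub unfolding orthogonal_comp_def by (auto simp: orthogonal_commute intro: span_base)
    have FFu: "FF u = (pp t, 0)" by (simp add: FF_def u_def pp_def BLs[OF t])
    have "FF u = FF y + FF z" unfolding yz(3) by (rule linear_add[OF bounded_linear.linear[OF FF_bl]])
    moreover have "FF y = 0" using yS by (simp add: SK_def)
    ultimately have "FF z = (pp t, 0)" using FFu by simp
    then have "norm (FF z) = norm (pp t)" by (simp add: norm_Pair)
    then have ez: "e * norm z \<le> norm (pp t)" using e(2) zS by metis
    have "\<Delta> \<bullet> u = \<Delta> \<bullet> z"
      using perp_eta[OF yS t] by (simp add: yz(3) inner_add_left inner_add_right \<Delta>_def inner_commute)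
    also have "\<dots> \<le> norm \<Delta> * norm z" by (rule norm_cauchy_schwarz)
    finally have up: "\<Delta> \<bullet> u \<le> norm \<Delta> * norm z" .
    have low: "gmin * c0 * (norm \<Delta>)^2 \<le> \<Delta> \<bullet> u"
    proof -
      have "gmin * c0 * (norm \<Delta>)^2 = (\<Sum>k\<in>UNIV. gmin * c0 * (\<Delta>$k * \<Delta>$k))"
        by (simp add: norm_sq_sum sum_distrib_left)
      also have "\<dots> \<le> (\<Sum>k\<in>UNIV. gam$k * (\<Delta>$k * (sin (\<eta> t$k) - sin (\<eta>b$k))))"
      proof (rule sum_mono)
        fix k
        have a: "\<bar>\<eta>b$k\<bar> \<le> rr" using rr_ge[of k] rho_facts(1)[OF etab_k[of k]] by linarith
        have "c0 * (\<Delta>$k)^2 \<le> \<Delta>$k * (sin (\<eta> t$k) - sin (\<eta>b$k))"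
          using sin_strong_mono[OF rr_lt eta_rr[OF t] a] by (simp add: \<Delta>_def c0_def)
        moreover have "gmin * (c0 * (\<Delta>$k)^2) \<le> gam$k * (c0 * (\<Delta>$k)^2)"
          using gmin_le[of k] c0_pos by (intro mult_right_mono) auto
        moreover have "gam$k * (c0 * (\<Delta>$k)^2) \<le> gam$k * (\<Delta>$k * (sin (\<eta> t$k) - sin (\<eta>b$k)))"
          using calculation(1) gam by (intro mult_left_mono) (auto simp: less_imp_le)
        ultimately show "gmin * c0 * (\<Delta>$k * \<Delta>$k) \<le> gam$k * (\<Delta>$k * (sin (\<eta> t$k) - sin (\<eta>b$k)))"
          by (simp add: power2_eq_square mult_ac)
      qed
      also have "\<dots> = \<Delta> \<bullet> u"
        by (simp add: u_def ss_def inner_vec_def diagm_nth vsin_def mult_ac)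
      finally show ?thesis .
    qed
    have "gmin * c0 * e * (norm \<Delta> * norm \<Delta>) \<le> norm \<Delta> * (e * norm z)"
      using low up e(1) by (simp add: power2_eq_square mult_ac)
    also have "\<dots> \<le> norm \<Delta> * norm (pp t)" using ez by (simp add: mult_left_mono)
    finally have h: "(gmin * c0 * e * norm \<Delta>) * norm \<Delta> \<le> norm (pp t) * norm \<Delta>" by (simp add: mult_ac)
    show ?thesis
    proof (cases "norm \<Delta> = 0")
      case True then show ?thesis by (simp add: \<Delta>_def)
    next
      case False
      then have "norm \<Delta> > 0" by simp
      with h show ?thesis unfolding \<Delta>_def[symmetric] by (meson mult_right_le_imp_le)
    qed
  qed
  moreover have "gmin * c0 * e > 0" using gmin_pos c0_pos e by simp
  ultimately show ?thesis by blast
qed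

lemma step3: "\<kappa> > 0 \<Longrightarrow> \<exists>T\<ge>0. \<forall>t\<ge>T. norm (\<eta> t - \<eta>b) < \<kappa>"
proof -
  assume k: "\<kappa> > 0"
  obtain e where e: "e > 0" "\<forall>t\<ge>0. e * norm (\<eta> t - \<eta>b) \<le> norm (pp t)" using eta_pp by blast
  obtain T where T: "T \<ge> 0" "\<forall>t\<ge>T. norm (pp t) < e * \<kappa>" using step2[of "e * \<kappa>"] k e by auto
  have "norm (\<eta> t - \<eta>b) < \<kappa>" if "t \<ge> T" for t
  proof -
    have "e * norm (\<eta> t - \<eta>b) < e * \<kappa>" using e T that by (meson order.trans order_le_less_trans)
    then show ?thesis using e by simp
  qed
  then show ?thesis using T by blast
qed

lemma conv: "((\<lambda>t. (\<eta> t, \<omega> t)) \<longlongrightarrow> (\<eta>b, \<omega>b)) at_top"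
proof (rule tendsto_Pair)
  show "(\<eta> \<longlongrightarrow> \<eta>b) at_top"
    unfolding tendsto_iff eventually_at_top_linorder dist_norm
    using step3 by (meson order.trans)
  show "(\<omega> \<longlongrightarrow> \<omega>b) at_top"
    unfolding tendsto_iff eventually_at_top_linorder dist_norm
    using step1 by (simp add: ee_def) (meson order.trans)
qed

end



context sys begin

definition "Vval x w = (\<Sum>i\<in>UNIV. Mv$i/2 * (w$i - \<omega>b$i)^2) + (\<Sum>k\<in>UNIV. gam$k * Uf (\<eta>b$k) (x$k))"

lemma eps_exists: "\<exists>\<epsilon>>0. \<forall>x w. dist x \<eta>b < \<epsilon> \<and> dist w \<omega>b < \<epsilon> \<longrightarrow> Vval x w < del"
proof -
  define S where "S = (\<Sum>i\<in>UNIV. Mv$i/2) + (\<Sum>k\<in>UNIV. gam$k * 2)"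
  have S0: "S \<ge> 0" unfolding S_def using Mpos gam
    by (intro add_nonneg_nonneg sum_nonneg) (auto simp: less_imp_le)
  define \<epsilon> where "\<epsilon> = min 1 (del / (S + 1))"
  have \<epsilon>: "\<epsilon> > 0" "\<epsilon> \<le> 1" "\<epsilon> \<le> del / (S + 1)" using del_pos S0 by (auto simp: \<epsilon>_def)
  have "Vval x w < del" if h: "dist x \<eta>b < \<epsilon>" "dist w \<omega>b < \<epsilon>" for x w
  proof -
    have a: "(w$i - \<omega>b$i)^2 \<le> \<epsilon>" for i
    proof -
      have "\<bar>w$i - \<omega>b$i\<bar> \<le> norm (w - \<omega>b)" using component_le_norm_cart[of "w - \<omega>b" i] by simp
      then have "\<bar>w$i - \<omega>b$i\<bar> \<le> \<epsilon>" using h by (simp add: dist_norm)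
      then have "\<bar>w$i - \<omega>b$i\<bar>^2 \<le> \<epsilon>^2" by (intro power_mono) auto
      also have "\<epsilon>^2 \<le> \<epsilon>" using \<epsilon> by (simp add: power2_eq_square mult_left_le_one_le)
      finally show ?thesis by simp
    qed
    have b: "Uf (\<eta>b$k) (x$k) \<le> 2 * \<epsilon>" for k
    proof -
      have "\<bar>x$k - \<eta>b$k\<bar> \<le> norm (x - \<eta>b)" using component_le_norm_cart[of "x - \<eta>b" k] by simp
      then have "\<bar>x$k - \<eta>b$k\<bar> \<le> \<epsilon>" using h by (simp add: dist_norm)
      then show ?thesis using Uf_upper[of "\<eta>b$k" "x$k"] by argo
    qed
    have "Vval x w \<le> (\<Sum>i\<in>UNIV. Mv$i/2 * \<epsilon>) + (\<Sum>k\<in>UNIV. gam$k * (2 * \<epsilon>))"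
      unfolding Vval_def using a b Mpos gam
      by (intro add_mono sum_mono mult_left_mono) (auto simp: less_imp_le)
    also have "\<dots> = S * \<epsilon>" by (simp add: S_def sum_distrib_left sum_distrib_right algebra_simps sum_divide_distrib)
    also have "\<dots> \<le> S * (del / (S + 1))" using \<epsilon> S0 by (intro mult_left_mono) auto
    also have "\<dots> < del" using S0 del_pos by (simp add: field_simps)
    finally show ?thesis .
  qed
  then show ?thesis using \<epsilon> by blast
qed

end

theorem theorem2:
  fixes B :: "real^'e^('g::finite + 'l::finite)"
    and gam :: "real^'e" and Mv Av :: "real^'g"
    and ub :: "real^'g" and \<eta>b :: "real^'e" and \<omega>b :: "real^'g"
  assumes "incidence_matrix B" and "connected_incidence B"
    and "\<forall>k. gam $ k > 0" and "\<forall>i. Mv $ i > 0" and "\<forall>i. Av $ i > 0"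
    and "\<eta>b \<in> Omega" and "\<eta>b \<in> imBT B"
    and "is_equilibrium B gam Mv Av ub \<eta>b \<omega>b"
  shows "\<exists>\<epsilon>>0. \<forall>\<eta> \<omega>.
           is_solution B gam Mv Av ub \<eta> \<omega> \<and> \<eta> 0 \<in> imBT B
           \<and> BL B *v (diagm gam *v vsin (\<eta> 0)) = BL B *v (diagm gam *v vsin \<eta>b)
           \<and> dist (\<eta> 0) \<eta>b < \<epsilon> \<and> dist (\<omega> 0) \<omega>b < \<epsilon>
           \<longrightarrow> ((\<lambda>t. (\<eta> t, \<omega> t)) \<longlongrightarrow> (\<eta>b, \<omega>b)) at_top"
proof -
  interpret s: sys B gam Mv Av ub \<eta>b \<omega>b using assms by unfold_locales
  obtain \<epsilon> where \<epsilon>: "\<epsilon> > 0" "\<forall>x w. dist x \<eta>b < \<epsilon> \<and> dist w \<omega>b < \<epsilon> \<longrightarrow> s.Vval x w < s.del"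
    using s.eps_exists by blast
  show ?thesis
  proof (intro exI[of _ \<epsilon>] conjI allI impI)
    show "\<epsilon> > 0" by (rule \<epsilon>(1))
    fix \<eta> :: "real \<Rightarrow> real^'e" and \<omega> :: "real \<Rightarrow> real^'g"
    assume h: "is_solution B gam Mv Av ub \<eta> \<omega> \<and> \<eta> 0 \<in> imBT B
           \<and> BL B *v (diagm gam *v vsin (\<eta> 0)) = BL B *v (diagm gam *v vsin \<eta>b)
           \<and> dist (\<eta> 0) \<eta>b < \<epsilon> \<and> dist (\<omega> 0) \<omega>b < \<epsilon>"
    interpret t: traj B gam Mv Av ub \<eta>b \<omega>b \<eta> \<omega>
      using h by unfold_locales auto
    have "t.V 0 < s.del" using \<epsilon>(2) h by (simp add: t.V_def s.Vval_def)
    then interpret t2: traj2 B gam Mv Av ub \<eta>b \<omega>b \<eta> \<omega> by unfold_locales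
    show "((\<lambda>t. (\<eta> t, \<omega> t)) \<longlongrightarrow> (\<eta>b, \<omega>b)) at_top" by (rule t2.conv)
  qed
qed


end
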